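(* Let $B^{H,K}$ be a bifractional Brownian motion with $0<H\le1/2$, $0<K\le1$ and $2HK=1/2$. Then for every $T>0$, $W=B^{H,K}$ satisfies conditions (i)–(iv) below on $[0,T]$ (with constants depending on $T$).
   Context: The bifractional Brownian motion $B^{H,K}=\{B^{H,K}_t,t\ge0\}$, $H\in(0,1)$, $K\in(0,1]$, is the centered Gaussian process with $\mathbb E[B^{H,K}_tB^{H,K}_s]=2^{-K}\big[(t^{2H}+s^{2H})^K-|t-s|^{2HK}\big]$. Conditions for a centered Gaussian process $W$ on $[0,T]$: (i) $\mathbb E[(W_t-W_{t-s})^2]\le C_1 s^{1/2}$ for $0<s\le t\le T$. (ii) There are $1<\alpha\le3/2$, $\beta=\frac32-\alpha$ such that for $s>0$, $2s\le r,t\le T$, $|t-r|\ge2s$: $|\mathbb E[(W_t-W_{t-s})(W_r-W_{r-s})]|\le C_1s^2|t-r|^{-\alpha}(t\wedge r-s)^{-\beta}+C_1s^2|t-r|^{-3/2}$. (iii) For $0<t\le T$, $0<s\le r\le T$: $|\mathbb E[W_t(W_{r+s}-2W_r+W_{r-s})]|\le C_2s^{1/2}$ if $r<2s$ or $|t-r|<2s$, and $\le C_2s^2((r-s)^{-3/2}+|t-r|^{-3/2})$ if $r\ge2s$ and $|t-r|\ge2s$. (iv) For $0<s\le t\le T-s$: $|\mathbb E[W_t(W_{t+s}-W_{t-s})]|\le C_3s^{1/2}$ if $t<2s$ and $\le C_3s(t-s)^{-1/2}$ if $t\ge2s$; for $0<s\le r\le T$: $|\mathbb E[W_r(W_{t+s}-W_{t-s})]|\le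 C_3s^{1/2}$ if $t<2s$ or $|t-r|<2s$, and $\le C_3s(t-s)^{-1/2}+C_3s|t-r|^{-1/2}$ if $t\ge2s$ and $|t-r|\ge2s$; and for $t>2s$: $|\mathbb E[W_s(W_t-W_{t-s})]|\le C_3s^{1/2+\gamma}(t-2s)^{-\gamma}$ for some $\gamma>0$. *)

theory Defs
  imports Complex_Main
begin

definition bfbm_cov :: "real \<Rightarrow> real \<Rightarrow> real \<Rightarrow> real \<Rightarrow> real" where
  "bfbm_cov H K t s =
     2 powr (- K) * ((t powr (2*H) + s powr (2*H)) powr K - \<bar>t - s\<bar> powr (2*H*K))"

text \<open>For a centered process W with covariance R, all quantities in conditions (i)-(iv)
  are bilinear in W and hence determined by R:
  E[(W_a - W_b)(W_c - W_d)] = R a c - R a d - R b c + R b d.\<close>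
definition incr_cov :: "(real \<Rightarrow> real \<Rightarrow> real) \<Rightarrow> real \<Rightarrow> real \<Rightarrow> real \<Rightarrow> real \<Rightarrow> real" where
  "incr_cov R a b c d = R a c - R a d - R b c + R b d"

text \<open>E[W_t (W_{r+s} - 2 W_r + W_{r-s})]\<close>
definition second_diff_cov :: "(real \<Rightarrow> real \<Rightarrow> real) \<Rightarrow> real \<Rightarrow> real \<Rightarrow> real \<Rightarrow> real" where
  "second_diff_cov R t r s = R t (r + s) - 2 * R t r + R t (r - s)"

definition cond_i :: "(real \<Rightarrow> real \<Rightarrow> real) \<Rightarrow> real \<Rightarrow> real \<Rightarrow> bool" where
  "cond_i R T C1 \<longleftrightarrow>
     (\<forall>s t. 0 < s \<and> s \<le> t \<and> t \<le> T \<longrightarrow> incr_cov R t (t - s) t (t - s) \<le> C1 * s powr (1/2))"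

definition cond_ii :: "(real \<Rightarrow> real \<Rightarrow> real) \<Rightarrow> real \<Rightarrow> real \<Rightarrow> bool" where
  "cond_ii R T C1 \<longleftrightarrow>
     (\<exists>\<alpha> \<beta>. 1 < \<alpha> \<and> \<alpha> \<le> 3/2 \<and> \<beta> = 3/2 - \<alpha> \<and>
       (\<forall>s t r. 0 < s \<and> 2*s \<le> r \<and> r \<le> T \<and> 2*s \<le> t \<and> t \<le> T \<and> \<bar>t - r\<bar> \<ge> 2*s \<longrightarrow>
          \<bar>incr_cov R t (t - s) r (r - s)\<bar>
            \<le> C1 * s^2 * \<bar>t - r\<bar> powr (-\<alpha>) * (min t r - s) powr (-\<beta>)
               + C1 * s^2 * \<bar>t - r\<bar> powr (-3/2)))"

definition cond_iii :: "(real \<Rightarrow> real \<Rightarrow> real) \<Rightarrow> real \<Rightarrow> real \<Rightarrow> bool" where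
  "cond_iii R T C2 \<longleftrightarrow>
     (\<forall>t r s. 0 < t \<and> t \<le> T \<and> 0 < s \<and> s \<le> r \<and> r \<le> T \<longrightarrow>
        ((r < 2*s \<or> \<bar>t - r\<bar> < 2*s) \<longrightarrow> \<bar>second_diff_cov R t r s\<bar> \<le> C2 * s powr (1/2)) \<and>
        ((r \<ge> 2*s \<and> \<bar>t - r\<bar> \<ge> 2*s) \<longrightarrow>
           \<bar>second_diff_cov R t r s\<bar> \<le> C2 * s^2 * ((r - s) powr (-3/2) + \<bar>t - r\<bar> powr (-3/2))))"

definition cond_iv :: "(real \<Rightarrow> real \<Rightarrow> real) \<Rightarrow> real \<Rightarrow> real \<Rightarrow> bool" where
  "cond_iv R T C3 \<longleftrightarrow>
     (\<forall>s t. 0 < s \<and> s \<le> t \<and> t \<le> T - s \<longrightarrow>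
        (t < 2*s \<longrightarrow> \<bar>R t (t + s) - R t (t - s)\<bar> \<le> C3 * s powr (1/2)) \<and>
        (t \<ge> 2*s \<longrightarrow> \<bar>R t (t + s) - R t (t - s)\<bar> \<le> C3 * s * (t - s) powr (-1/2))) \<and>
     (\<forall>s t r. 0 < s \<and> s \<le> t \<and> t \<le> T - s \<and> s \<le> r \<and> r \<le> T \<longrightarrow>
        ((t < 2*s \<or> \<bar>t - r\<bar> < 2*s) \<longrightarrow> \<bar>R r (t + s) - R r (t - s)\<bar> \<le> C3 * s powr (1/2)) \<and>
        ((t \<ge> 2*s \<and> \<bar>t - r\<bar> \<ge> 2*s) \<longrightarrow>
           \<bar>R r (t + s) - R r (t - s)\<bar> \<le> C3 * s * (t - s) powr (-1/2) + C3 * s * \<bar>t - r\<bar> powr (-1/2))) \<and>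
     (\<exists>\<gamma>>0. \<forall>s t. 0 < s \<and> 2*s < t \<and> t \<le> T \<longrightarrow>
        \<bar>R s t - R s (t - s)\<bar> \<le> C3 * s powr (1/2 + \<gamma>) * (t - 2*s) powr (-\<gamma>))"

end

theory Submission
  imports Defs
begin

lemma pw_mhalf: "0 < y \<Longrightarrow> y powr (-1/2) = 1 / sqrt y"
  for y :: real
proof -
  assume y: "0 < y"
  have e: "(-1/2::real) = - (1/2)" by simp
  have "y powr (-1/2) = y powr (- (1/2))" by (simp only: e)
  also have "\<dots> = inverse (y powr (1/2))" by (rule powr_minus)
  also have "\<dots> = 1 / sqrt y" using y by (simp add: powr_half_sqrt inverse_eq_divide)
  finally show ?thesis .
qed
lemma pw_m32: "0 < y \<Longrightarrow> y powr (-3/2) = 1 / (y * sqrt y)"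
  for y :: real
proof -
  assume y: "0 < y"
  have e: "(-3/2::real) = - (1 + 1/2)" by simp
  have "y powr (-3/2) = y powr (- (1 + 1/2))" by (simp only: e)
  also have "\<dots> = inverse (y powr (1 + 1/2))" by (rule powr_minus)
  also have "y powr (1 + 1/2) = y powr 1 * y powr (1/2)" by (rule powr_add)
  also have "\<dots> = y * sqrt y" using y by (simp add: powr_half_sqrt)
  finally show ?thesis by (simp add: inverse_eq_divide)
qed

lemma sq_hold: "0 \<le> a \<Longrightarrow> 0 \<le> b \<Longrightarrow> \<bar>sqrt a - sqrt b\<bar> \<le> sqrt \<bar>a - b\<bar>"
  for a b :: real
proof -
  have *: "sqrt a - sqrt b \<le> sqrt \<bar>a - b\<bar>" if "0 \<le> a" "0 \<le> b" for a b :: real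
  proof (cases "b \<le> a")
    case True
    have "sqrt a = sqrt ((a - b) + b)" by simp
    also have "\<dots> \<le> sqrt (a - b) + sqrt b" by (rule sqrt_add_le_add_sqrt) (use True that in auto)
    finally show ?thesis using True by simp
  next
    case False
    then have "sqrt a \<le> sqrt b" by simp
    moreover have "0 \<le> sqrt \<bar>a - b\<bar>" by simp
    ultimately show ?thesis by linarith
  qed
  assume "0 \<le> a" "0 \<le> b"
  then show ?thesis using *[of a b] *[of b a] by (simp add: abs_minus_commute)
qed

lemma sq_lip:
  fixes a b m :: real
  assumes "0 < m" "m \<le> a" "m \<le> b"
  shows "\<bar>sqrt a - sqrt b\<bar> \<le> \<bar>a - b\<bar> * ((1/2) * m powr (-1/2))"
proof -
  have sa: "sqrt m \<le> sqrt a" "sqrt m \<le> sqrt b" using assms by auto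
  have sm: "0 < sqrt m" using assms by simp
  have eq: "(sqrt a - sqrt b) * (sqrt a + sqrt b) = a - b" using assms
    by (simp add: algebra_simps)
  have pos: "0 < sqrt a + sqrt b" using sa sm by linarith
  have q: "sqrt a - sqrt b = (a - b) / (sqrt a + sqrt b)" using eq pos by (simp add: eq_divide_eq)
  have "\<bar>sqrt a - sqrt b\<bar> = \<bar>a - b\<bar> / (sqrt a + sqrt b)"
    unfolding q using pos by (simp add: abs_divide)
  also have "\<dots> \<le> \<bar>a - b\<bar> / (2 * sqrt m)"
  proof (rule divide_left_mono)
    show "2 * sqrt m \<le> sqrt a + sqrt b" using sa by linarith
    show "0 < (sqrt a + sqrt b) * (2 * sqrt m)" using sm pos by simp
  qed simp
  also have "\<dots> = \<bar>a - b\<bar> * ((1/2) * m powr (-1/2))" unfolding pw_mhalf[OF assms(1)] by simp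
  finally show ?thesis .
qed

lemma sq_second:
  fixes d s :: real
  assumes "0 < s" "s \<le> d"
  shows "\<bar>sqrt (d + s) - 2 * sqrt d + sqrt (d - s)\<bar> \<le> 2 * s^2 * d powr (-3/2)"
proof -
  define a b e where "a = sqrt (d + s)" "b = sqrt d" "e = sqrt (d - s)"
  have a2: "a^2 = d + s" "b^2 = d" "e^2 = d - s" using assms by (auto simp: a_b_e_def)
  have nn: "0 \<le> e" "0 < b" "b \<le> a" using assms by (auto simp: a_b_e_def)
  have h1: "(a - b) * (a + b) = s" using a2 by (simp add: algebra_simps power2_eq_square)
  have h2: "(b - e) * (b + e) = s" using a2 by (simp add: algebra_simps power2_eq_square)
  have h3: "(a - e) * (a + e) = 2 * s" using a2 by (simp add: algebra_simps power2_eq_square)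
  define P where "P = (a + b) * (b + e) * (a + e)"
  have "(a - 2 * b + e) * P = ((a - b) * (a + b)) * ((b + e) * (a + e)) - ((b - e) * (b + e)) * ((a + b) * (a + e))"
    unfolding P_def by (simp add: algebra_simps)
  also have "\<dots> = - s * ((a - e) * (a + e))" unfolding h1 h2 by (simp add: algebra_simps)
  also have "\<dots> = - 2 * s^2" unfolding h3 by (simp add: power2_eq_square)
  finally have key: "(a - 2 * b + e) * P = - 2 * s^2" .
  have bb: "b * b \<le> (a + b) * (b + e)" using nn by (intro mult_mono) auto
  have bP: "b * b * b \<le> P" unfolding P_def using nn bb by (intro mult_mono) auto
  have "0 < b * b * b" using nn by simp
  then have Ppos: "0 < P" using bP by linarith
  have q: "a - 2 * b + e = - 2 * s^2 / P"
  proof -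
    have "a - 2 * b + e = ((a - 2 * b + e) * P) / P" using Ppos by simp
    then show ?thesis unfolding key .
  qed
  have "\<bar>a - 2 * b + e\<bar> = 2 * s^2 / P" unfolding q using Ppos by (simp add: abs_divide)
  also have "\<dots> \<le> 2 * s^2 / (b * b * b)" using bP nn Ppos by (intro divide_left_mono) auto
  also have "b * b * b = d * sqrt d" using a2(2) nn by (simp add: a_b_e_def)
  also have "2 * s^2 / (d * sqrt d) = 2 * s^2 * d powr (-3/2)" proof -
    have dpos: "0 < d" using assms by simp
    show ?thesis unfolding pw_m32[OF dpos] by simp
  qed
  finally show ?thesis by (simp add: a_b_e_def)
qed


lemma powr_subadd:
  fixes a b q :: real
  assumes "0 \<le> a" "0 \<le> b" "0 < q" "q \<le> 1"
  shows "(a+b) powr q \<le> a powr q + b powr q"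
proof (cases "a + b = 0")
  case True
  then have "a = 0" "b = 0" using assms by auto
  then show ?thesis by simp
next
  case False
  define S where "S = a + b"
  have S: "S > 0" using False assms S_def by auto
  have ha: "a / S \<le> (a/S) powr q"
  proof (cases "a = 0")
    case True then show ?thesis by simp
  next
    case False
    have "(a/S) powr 1 \<le> (a/S) powr q"
      by (rule powr_mono') (use assms S S_def False in \<open>auto simp: divide_simps\<close>)
    then show ?thesis using False assms S by simp
  qed
  have hb: "b / S \<le> (b/S) powr q"
  proof (cases "b = 0")
    case True then show ?thesis by simp
  next
    case False
    have "(b/S) powr 1 \<le> (b/S) powr q"
      by (rule powr_mono') (use assms S S_def False in \<open>auto simp: divide_simps\<close>)
    then show ?thesis using False assms S by simp
  qed
  have "1 = a/S + b/S" using S S_def by (simp add: add_divide_distrib[symmetric])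
  also have "\<dots> \<le> (a/S) powr q + (b/S) powr q" using ha hb by simp
  also have "\<dots> = (a powr q + b powr q) / S powr q" using assms S
    by (simp add: powr_divide add_divide_distrib)
  finally have "S powr q \<le> a powr q + b powr q" using S by (simp add: divide_simps)
  then show ?thesis by (simp add: S_def)
qed

locale bf =
  fixes p K :: real
  assumes p0: "0 < p" and p1: "p \<le> 1" and K0: "0 < K" and K1: "K \<le> 1" and pK: "p * K = 1/2"
begin

definition g :: "real \<Rightarrow> real \<Rightarrow> real" where
  "g x y = (x powr p + y powr p) powr K"

lemma g_sym: "g x y = g y x" by (simp add: g_def add.commute)

lemma g_mono1: assumes "0 \<le> x" "x \<le> x'" shows "g x y \<le> g x' y"
  unfolding g_def using assms p0 K0
  by (intro powr_mono2) (auto intro: powr_mono2)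

lemma g_hoelder:
  assumes "0 \<le> x" "0 \<le> y1" "y1 \<le> y2"
  shows "g x y2 - g x y1 \<le> sqrt (y2 - y1)"
proof -
  have a: "y2 powr p - y1 powr p \<le> (y2 - y1) powr p"
    using powr_subadd[of "y2 - y1" y1 p] assms p0 p1 by simp
  have b: "0 \<le> y2 powr p - y1 powr p" using assms p0 by (simp add: powr_mono2)
  have "g x y2 = ((x powr p + y1 powr p) + (y2 powr p - y1 powr p)) powr K"
    by (simp add: g_def)
  also have "\<dots> \<le> (x powr p + y1 powr p) powr K + (y2 powr p - y1 powr p) powr K"
    by (rule powr_subadd) (use b K0 K1 in auto)
  also have "(y2 powr p - y1 powr p) powr K \<le> ((y2 - y1) powr p) powr K"
    by (rule powr_mono2) (use a b K0 in auto)
  also have "((y2 - y1) powr p) powr K = sqrt (y2 - y1)"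
    unfolding powr_powr pK using assms by (simp add: powr_half_sqrt)
  finally show ?thesis by (simp add: g_def)
qed

lemma g_mono2: assumes "0 \<le> x" "0 \<le> y" "y \<le> y'" shows "g x y \<le> g x y'"
  using g_mono1[of y y' x] assms by (simp add: g_sym)


lemma pw_mult: "0 < y \<Longrightarrow> y powr a * y powr b = y powr (a + b)"
  for y a b :: real by (simp add: powr_add)

lemma pw_pw: "(y powr a) powr b = y powr (a * b)"
  for y a b :: real by (simp add: powr_powr)

definition fd :: "real \<Rightarrow> real \<Rightarrow> real" where
  "fd A y = K * p * ((A + y powr p) powr (K - 1) * y powr (p - 1))"

lemma f_deriv:
  assumes "0 \<le> A" "0 < y"
  shows "((\<lambda>y. (A + y powr p) powr K) has_real_derivative fd A y) (at y)"
proof -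
  have d: "((\<lambda>y. A + y powr p) has_real_derivative (p * y powr (p - 1))) (at y)"
    using assms by (auto intro!: derivative_eq_intros)
  have pos: "A + y powr p > 0" using assms by (simp add: add_nonneg_pos)
  show ?thesis using DERIV_fun_powr[OF d pos, of K] by (simp add: fd_def mult_ac)
qed

lemma fd_bound:
  assumes "0 \<le> A" "0 < y"
  shows "0 \<le> fd A y" "fd A y \<le> (1/2) * y powr (-1/2)"
proof -
  have S: "y powr p \<le> A + y powr p" "0 < y powr p" using assms by auto
  have "(A + y powr p) powr (K - 1) \<le> (y powr p) powr (K - 1)"
    by (rule powr_mono2') (use S K1 in auto)
  then have "(A + y powr p) powr (K - 1) * y powr (p - 1) \<le> (y powr p) powr (K - 1) * y powr (p - 1)"
    by (rule mult_right_mono) simp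
  also have "\<dots> = y powr (p * (K - 1) + (p - 1))" using assms by (simp add: pw_pw pw_mult)
  also have "p * (K - 1) + (p - 1) = -1/2" using pK by (simp add: algebra_simps)
  finally have "(A + y powr p) powr (K - 1) * y powr (p - 1) \<le> y powr (-1/2)" by simp
  then have "K * p * ((A + y powr p) powr (K - 1) * y powr (p - 1)) \<le> K * p * y powr (-1/2)"
    using K0 p0 by (intro mult_left_mono) auto
  moreover have Kp: "K * p = 1/2" using pK by (simp add: mult.commute)
  ultimately show "fd A y \<le> (1/2) * y powr (-1/2)" unfolding fd_def Kp by simp
  show "0 \<le> fd A y" using K0 p0 by (simp add: fd_def)
qed

lemma g_lip:
  assumes "0 \<le> x" "0 < y1" "y1 \<le> y2"
  shows "0 \<le> g x y2 - g x y1" "g x y2 - g x y1 \<le> (y2 - y1) * ((1/2) * y1 powr (-1/2))"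
proof -
  show "0 \<le> g x y2 - g x y1" using g_mono2[of x y1 y2] assms by simp
  show "g x y2 - g x y1 \<le> (y2 - y1) * ((1/2) * y1 powr (-1/2))"
  proof (cases "y1 = y2")
    case True then show ?thesis by simp
  next
    case False
    then have lt: "y1 < y2" using assms by simp
    have A: "0 \<le> x powr p" by simp
    obtain z where z: "y1 < z" "z < y2" "(x powr p + y2 powr p) powr K - (x powr p + y1 powr p) powr K = (y2 - y1) * fd (x powr p) z"
      using MVT2[OF lt, of "\<lambda>y. (x powr p + y powr p) powr K" "fd (x powr p)"] f_deriv[OF A] assms
      by force
    have "fd (x powr p) z \<le> (1/2) * z powr (-1/2)" using fd_bound[OF A, of z] z assms by simp
    also have "\<dots> \<le> (1/2) * y1 powr (-1/2)" using powr_mono2'[of "-1/2" y1 z] z assms by simp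
    finally have "(y2 - y1) * fd (x powr p) z \<le> (y2 - y1) * ((1/2) * y1 powr (-1/2))"
      using lt by (intro mult_left_mono) auto
    then show ?thesis using z by (simp add: g_def)
  qed
qed


definition fdd :: "real \<Rightarrow> real \<Rightarrow> real" where
  "fdd A y = K * p * ((K - 1) * (A + y powr p) powr (K - 2) * (p * y powr (p - 1)) * y powr (p - 1)
      + (A + y powr p) powr (K - 1) * ((p - 1) * y powr (p - 2)))"

lemma fd_deriv:
  assumes "0 \<le> A" "0 < y"
  shows "(fd A has_real_derivative fdd A y) (at y)"
proof -
  have d: "((\<lambda>y. A + y powr p) has_real_derivative (p * y powr (p - 1))) (at y)"
    using assms by (auto intro!: derivative_eq_intros)
  have pos: "A + y powr p > 0" using assms by (simp add: add_nonneg_pos)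
  have d1: "((\<lambda>y. (A + y powr p) powr (K - 1)) has_real_derivative
      (K - 1) * (A + y powr p) powr (K - 2) * (p * y powr (p - 1))) (at y)"
    using DERIV_fun_powr[OF d pos, of "K - 1"] by (simp add: algebra_simps)
  have d2: "((\<lambda>y. y powr (p - 1)) has_real_derivative (p - 1) * y powr (p - 2)) (at y)"
    using has_real_derivative_powr[OF assms(2), of "p - 1"] by (simp add: algebra_simps)
  note h = DERIV_cmult[OF DERIV_mult[OF d1 d2], of "K * p"]
  have e: "K * p * ((K - 1) * (A + y powr p) powr (K - 2) * (p * y powr (p - 1)) * y powr (p - 1) +
      (p - 1) * y powr (p - 2) * (A + y powr p) powr (K - 1)) = fdd A y"
    by (simp add: fdd_def algebra_simps)
  show ?thesis using h unfolding e fd_def[abs_def] by simp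
qed

lemma fdd_bound:
  assumes "0 \<le> A" "0 < y"
  shows "\<bar>fdd A y\<bar> \<le> (1/4) * y powr (-3/2)"
proof -
  define S where "S = A + y powr p"
  have S: "y powr p \<le> S" "0 < y powr p" using assms by (auto simp: S_def)
  define X1 where "X1 = S powr (K - 2) * y powr (p - 1) * y powr (p - 1)"
  define X2 where "X2 = S powr (K - 1) * y powr (p - 2)"
  have X1: "0 \<le> X1" "X1 \<le> y powr (-3/2)"
  proof -
    show "0 \<le> X1" by (simp add: X1_def)
    have "S powr (K - 2) \<le> (y powr p) powr (K - 2)"
      by (rule powr_mono2') (use S K1 in auto)
    then have "X1 \<le> (y powr p) powr (K - 2) * y powr (p - 1) * y powr (p - 1)"
      unfolding X1_def by (intro mult_right_mono) auto
    also have "\<dots> = y powr (p * (K - 2) + (p - 1) + (p - 1))" using assms by (simp add: pw_pw pw_mult)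
    also have "p * (K - 2) + (p - 1) + (p - 1) = -3/2" using pK by (simp add: algebra_simps)
    finally show "X1 \<le> y powr (-3/2)" by simp
  qed
  have X2: "0 \<le> X2" "X2 \<le> y powr (-3/2)"
  proof -
    show "0 \<le> X2" by (simp add: X2_def)
    have "S powr (K - 1) \<le> (y powr p) powr (K - 1)"
      by (rule powr_mono2') (use S K1 in auto)
    then have "X2 \<le> (y powr p) powr (K - 1) * y powr (p - 2)"
      unfolding X2_def by (intro mult_right_mono) auto
    also have "\<dots> = y powr (p * (K - 1) + (p - 2))" using assms by (simp add: pw_pw pw_mult)
    also have "p * (K - 1) + (p - 2) = -3/2" using pK by (simp add: algebra_simps)
    finally show "X2 \<le> y powr (-3/2)" by simp
  qed
  have Kp: "K * p = 1/2" using pK by (simp add: mult.commute)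
  have eq: "fdd A y = - (1/2) * ((1 - K) * p * X1 + (1 - p) * X2)"
    unfolding fdd_def Kp X1_def X2_def S_def by (simp add: algebra_simps)
  have "(1 - K) * p * X1 + (1 - p) * X2 \<le> (1 - K) * p * y powr (-3/2) + (1 - p) * y powr (-3/2)"
    using X1 X2 K1 p1 p0 by (intro add_mono mult_left_mono) auto
  also have "\<dots> = (p - K * p + 1 - p) * y powr (-3/2)" by (simp add: algebra_simps)
  also have "\<dots> = (1/2) * y powr (-3/2)" unfolding Kp by simp
  finally have le: "(1 - K) * p * X1 + (1 - p) * X2 \<le> (1/2) * y powr (-3/2)" .
  have ge: "0 \<le> (1 - K) * p * X1 + (1 - p) * X2" using X1 X2 K1 p1 p0 by simp
  show ?thesis unfolding eq using le ge by (simp add: abs_mult)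
qed


lemma f_deriv_shift:
  assumes "0 \<le> A" "0 < r + c * u"
  shows "((\<lambda>u. (A + (r + c * u) powr p) powr K) has_real_derivative fd A (r + c * u) * c) (at u)"
proof -
  have d: "((\<lambda>u. r + c * u) has_real_derivative c) (at u)"
    by (auto intro!: derivative_eq_intros)
  show ?thesis using DERIV_chain2[OF f_deriv[OF assms] d] by simp
qed

lemma g_second:
  assumes "0 \<le> x" "0 < s" "s < r"
  shows "\<bar>g x (r + s) - 2 * g x r + g x (r - s)\<bar> \<le> (1/2) * s^2 * (r - s) powr (-3/2)"
proof -
  define A where "A = x powr p"
  have A: "0 \<le> A" by (simp add: A_def)
  define \<phi> where "\<phi> u = (A + (r + 1 * u) powr p) powr K + (A + (r + (-1) * u) powr p) powr K" for u
  have der: "DERIV \<phi> u :> fd A (r + u) - fd A (r - u)" if "0 \<le> u" "u \<le> s" for u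
  proof -
    have "DERIV \<phi> u :> fd A (r + 1 * u) * 1 + fd A (r + (-1) * u) * (-1)"
      unfolding \<phi>_def[abs_def]
      by (intro DERIV_add f_deriv_shift A) (use that assms in auto)
    then show ?thesis by simp
  qed
  obtain \<xi> where xi: "0 < \<xi>" "\<xi> < s" "\<phi> s - \<phi> 0 = (s - 0) * (fd A (r + \<xi>) - fd A (r - \<xi>))"
    using MVT2[OF assms(2), of \<phi> "\<lambda>u. fd A (r + u) - fd A (r - u)"] der by force
  have lt: "r - \<xi> < r + \<xi>" using xi by simp
  obtain \<eta> where eta: "r - \<xi> < \<eta>" "\<eta> < r + \<xi>" "fd A (r + \<xi>) - fd A (r - \<xi>) = ((r + \<xi>) - (r - \<xi>)) * fdd A \<eta>"
    using MVT2[OF lt, of "fd A" "fdd A"] fd_deriv[OF A] xi assms by force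
  have eta_pos: "r - s < \<eta>" "0 < r - s" using eta xi assms by auto
  have "\<bar>fdd A \<eta>\<bar> \<le> (1/4) * \<eta> powr (-3/2)" using fdd_bound[OF A, of \<eta>] eta_pos by simp
  also have "\<dots> \<le> (1/4) * (r - s) powr (-3/2)"
    using powr_mono2'[of "-3/2" "r - s" \<eta>] eta_pos by simp
  finally have fb: "\<bar>fdd A \<eta>\<bar> \<le> (1/4) * (r - s) powr (-3/2)" .
  have tgt: "g x (r + s) - 2 * g x r + g x (r - s) = \<phi> s - \<phi> 0"
    by (simp add: \<phi>_def g_def A_def)
  have "\<bar>\<phi> s - \<phi> 0\<bar> = s * (2 * \<xi>) * \<bar>fdd A \<eta>\<bar>" using xi eta by (simp add: abs_mult)
  also have "\<dots> \<le> s * (2 * s) * ((1/4) * (r - s) powr (-3/2))"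
    using xi fb assms by (intro mult_mono) auto
  also have "\<dots> = (1/2) * s^2 * (r - s) powr (-3/2)" by (simp add: power2_eq_square)
  finally show ?thesis unfolding tgt .
qed


lemma g_mixed:
  assumes "0 < y1" "y1 < y2" "y2 \<le> x1" "x1 < x2"
  shows "\<bar>g x2 y2 - g x2 y1 - g x1 y2 + g x1 y1\<bar>
     \<le> (1 - K) / 2 * (x2 - x1) * (y2 - y1) * (y1 powr (p - 1) * x1 powr (-1/2 - p))"
proof -
  define \<phi> where "\<phi> x = (y2 powr p + x powr p) powr K - (y1 powr p + x powr p) powr K" for x
  have der: "DERIV \<phi> x :> fd (y2 powr p) x - fd (y1 powr p) x" if "x1 \<le> x" "x \<le> x2" for x
    unfolding \<phi>_def[abs_def]
    by (intro DERIV_diff f_deriv) (use that assms in auto)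
  obtain \<xi> where xi: "x1 < \<xi>" "\<xi> < x2" "\<phi> x2 - \<phi> x1 = (x2 - x1) * (fd (y2 powr p) \<xi> - fd (y1 powr p) \<xi>)"
    using MVT2[OF assms(4), of \<phi>] der by force
  have xpos: "0 < \<xi>" using xi assms by auto
  define c where "c = K * p * \<xi> powr (p - 1)"
  define F where "F y = (y powr p + \<xi> powr p) powr (K - 1)" for y
  define F' where "F' y = (K - 1) * (y powr p + \<xi> powr p) powr (K - 2) * (p * y powr (p - 1))" for y
  have fdF: "fd (y powr p) \<xi> = c * F y" for y by (simp add: fd_def c_def F_def mult_ac)
  have derF: "DERIV (\<lambda>y. c * F y) y :> c * F' y" if "y1 \<le> y" "y \<le> y2" for y
  proof -
    have ypos: "0 < y" using that assms by simp
    have d: "((\<lambda>y. y powr p + \<xi> powr p) has_real_derivative (p * y powr (p - 1))) (at y)"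
      using ypos by (auto intro!: derivative_eq_intros)
    have pos: "0 < y powr p + \<xi> powr p" using ypos xpos by (simp add: add_pos_pos)
    have "DERIV F y :> F' y"
      using DERIV_fun_powr[OF d pos, of "K - 1"] unfolding F_def[abs_def] F'_def
      by (simp add: algebra_simps)
    then show ?thesis by (rule DERIV_cmult)
  qed
  obtain \<eta> where eta: "y1 < \<eta>" "\<eta> < y2" "c * F y2 - c * F y1 = (y2 - y1) * (c * F' \<eta>)"
    using MVT2[OF assms(2), of "\<lambda>y. c * F y" "\<lambda>y. c * F' y"] derF by force
  have epos: "0 < \<eta>" using eta assms by simp
  have tgt: "g x2 y2 - g x2 y1 - g x1 y2 + g x1 y1 = \<phi> x2 - \<phi> x1"
    by (simp add: \<phi>_def g_def add.commute)
  have val: "\<phi> x2 - \<phi> x1 = (x2 - x1) * ((y2 - y1) * (c * F' \<eta>))"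
    using xi eta by (simp add: fdF)
  define S where "S = \<eta> powr p + \<xi> powr p"
  have S: "\<xi> powr p \<le> S" "0 < \<xi> powr p" using xpos by (auto simp: S_def)
  have S1: "S powr (K - 2) \<le> (\<xi> powr p) powr (K - 2)"
    by (rule powr_mono2') (use S K1 in auto)
  have abscF: "\<bar>c * F' \<eta>\<bar> = K * p * p * (1 - K) * (\<xi> powr (p - 1) * S powr (K - 2)) * \<eta> powr (p - 1)"
  proof -
    have eqn: "c * F' \<eta> = - (K * p * p * (1 - K) * (\<xi> powr (p - 1) * S powr (K - 2)) * \<eta> powr (p - 1))"
      by (simp add: c_def F'_def S_def algebra_simps)
    have nn: "0 \<le> K * p * p * (1 - K) * (\<xi> powr (p - 1) * S powr (K - 2)) * \<eta> powr (p - 1)"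
      using K0 K1 p0 by simp
    show ?thesis by (simp only: eqn abs_minus_cancel abs_of_nonneg[OF nn])
  qed
  have "\<xi> powr (p - 1) * S powr (K - 2) \<le> \<xi> powr (p - 1) * (\<xi> powr p) powr (K - 2)"
    using S1 by (intro mult_left_mono) auto
  also have "\<dots> = \<xi> powr ((p - 1) + p * (K - 2))" using xpos by (simp add: pw_pw pw_mult)
  also have "(p - 1) + p * (K - 2) = -1/2 - p" using pK by (simp add: algebra_simps)
  also have "\<xi> powr (-1/2 - p) \<le> x1 powr (-1/2 - p)"
    using powr_mono2'[of "-1/2 - p" x1 \<xi>] xi assms p0 by simp
  finally have b1: "\<xi> powr (p - 1) * S powr (K - 2) \<le> x1 powr (-1/2 - p)" .
  have b2: "\<eta> powr (p - 1) \<le> y1 powr (p - 1)"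
    using powr_mono2'[of "p - 1" y1 \<eta>] eta assms p1 by simp
  have Kp: "K * p = 1/2" using pK by (simp add: mult.commute)
  have coef: "K * p * p * (1 - K) \<le> (1 - K) / 2" unfolding Kp using p1 K1 p0 mult_right_mono[of p 1 "1 - K"] by simp
  have "\<bar>c * F' \<eta>\<bar> \<le> (1 - K) / 2 * (x1 powr (-1/2 - p) * y1 powr (p - 1))"
  proof -
    have ab: "(\<xi> powr (p - 1) * S powr (K - 2)) * \<eta> powr (p - 1) \<le> x1 powr (-1/2 - p) * y1 powr (p - 1)"
      by (rule mult_mono[OF b1 b2]) auto
    have "K * p * p * (1 - K) * ((\<xi> powr (p - 1) * S powr (K - 2)) * \<eta> powr (p - 1))
         \<le> (1 - K) / 2 * (x1 powr (-1/2 - p) * y1 powr (p - 1))"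
      by (rule mult_mono[OF coef ab]) (use K1 in auto)
    then show ?thesis unfolding abscF by (simp only: mult.assoc)
  qed
  then have B: "\<bar>c * F' \<eta>\<bar> \<le> (1 - K) / 2 * (x1 powr (-1/2 - p) * y1 powr (p - 1))" .
  have "\<bar>\<phi> x2 - \<phi> x1\<bar> = (x2 - x1) * ((y2 - y1) * \<bar>c * F' \<eta>\<bar>)"
    unfolding val using xi eta assms by (simp add: abs_mult)
  also have "\<dots> \<le> (x2 - x1) * ((y2 - y1) * ((1 - K) / 2 * (x1 powr (-1/2 - p) * y1 powr (p - 1))))"
    using xi eta assms B by (intro mult_left_mono) auto
  finally have "\<bar>\<phi> x2 - \<phi> x1\<bar> \<le> (x2 - x1) * ((y2 - y1) * ((1 - K) / 2 * (x1 powr (-1/2 - p) * y1 powr (p - 1))))" .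
  then show ?thesis unfolding tgt by (simp add: mult_ac)
qed


definition c :: real where "c = 2 powr (- K)"
definition R :: "real \<Rightarrow> real \<Rightarrow> real" where
  "R x y = c * (g x y - sqrt \<bar>x - y\<bar>)"

lemma c_pos: "0 < c" by (simp add: c_def)
lemma c_le1: "c \<le> 1"
proof -
  have "2 powr (- K) \<le> 2 powr 0" by (rule powr_mono) (use K0 in auto)
  then show ?thesis by (simp add: c_def)
qed

lemma R_sym: "R x y = R y x" by (simp add: R_def g_sym abs_minus_commute)

lemma R_hold:
  assumes "0 \<le> x" "0 \<le> y1" "y1 \<le> y2"
  shows "\<bar>R x y2 - R x y1\<bar> \<le> 2 * sqrt (y2 - y1)"
proof -
  have g1: "\<bar>g x y2 - g x y1\<bar> \<le> sqrt (y2 - y1)"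
    using g_hoelder[OF assms] g_mono2[of x y1 y2] assms by simp
  have "\<bar>sqrt \<bar>x - y2\<bar> - sqrt \<bar>x - y1\<bar>\<bar> \<le> sqrt \<bar>\<bar>x - y2\<bar> - \<bar>x - y1\<bar>\<bar>" by (rule sq_hold) auto
  also have "\<dots> \<le> sqrt (y2 - y1)" using assms by simp
  finally have h1: "\<bar>sqrt \<bar>x - y2\<bar> - sqrt \<bar>x - y1\<bar>\<bar> \<le> sqrt (y2 - y1)" .
  have "\<bar>R x y2 - R x y1\<bar> = c * \<bar>(g x y2 - g x y1) - (sqrt \<bar>x - y2\<bar> - sqrt \<bar>x - y1\<bar>)\<bar>"
  proof -
    have "R x y2 - R x y1 = c * ((g x y2 - g x y1) - (sqrt \<bar>x - y2\<bar> - sqrt \<bar>x - y1\<bar>))"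
      by (simp add: R_def algebra_simps)
    then show ?thesis using c_pos by (simp add: abs_mult)
  qed
  also have "\<dots> \<le> 1 * (sqrt (y2 - y1) + sqrt (y2 - y1))"
    using c_pos c_le1 g1 h1 by (intro mult_mono) auto
  finally show ?thesis by simp
qed


lemma L_i:
  assumes "0 < s" "s \<le> t"
  shows "incr_cov R t (t - s) t (t - s) \<le> 3 * sqrt s"
proof -
  define u where "u = t - s"
  have u: "0 \<le> u" "u \<le> t" "t - u = s" using assms by (auto simp: u_def)
  have e: "incr_cov R t u t u = c * ((g t t - g t u) + (g u u - g t u)) + 2 * c * sqrt s"
  proof -
    have gs: "g u t = g t u" by (rule g_sym)
    have ab: "\<bar>t - u\<bar> = s" "\<bar>u - t\<bar> = s" using u by auto
    show ?thesis unfolding incr_cov_def R_def gs ab by (simp add: algebra_simps)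
  qed
  have a: "g t t - g t u \<le> sqrt s" using g_hoelder[of t u t] u by simp
  have b: "g u u - g t u \<le> 0" using g_mono1[of u t u] u by simp
  have "c * ((g t t - g t u) + (g u u - g t u)) \<le> c * sqrt s"
    using a b c_pos by (intro mult_left_mono) auto
  then have "incr_cov R t u t u \<le> 3 * c * sqrt s" unfolding e by (simp add: algebra_simps)
  also have "\<dots> \<le> 3 * sqrt s" using c_le1 assms by (intro mult_right_mono) auto
  finally show ?thesis by (simp add: u_def)
qed

lemma L_ii:
  assumes "0 < s" "2 * s \<le> r" "r + 2 * s \<le> t"
  shows "\<bar>incr_cov R t (t - s) r (r - s)\<bar>
     \<le> (1 - K) / 2 * s^2 * ((r - s) powr (p - 1) * (t - r) powr (-1/2 - p)) + 2 * s^2 * (t - r) powr (-3/2)"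
proof -
  define d where "d = t - r"
  have d: "2 * s \<le> d" "0 < d" using assms by (auto simp: d_def)
  define Dg where "Dg = g t r - g t (r - s) - g (t - s) r + g (t - s) (r - s)"
  define Dh where "Dh = sqrt (d + s) - 2 * sqrt d + sqrt (d - s)"
  have e: "incr_cov R t (t - s) r (r - s) = c * Dg + c * Dh"
  proof -
    have "\<bar>t - r\<bar> = d" "\<bar>t - (r - s)\<bar> = d + s" "\<bar>t - s - r\<bar> = d - s" "\<bar>t - s - (r - s)\<bar> = d"
      using assms by (auto simp: d_def)
    then show ?thesis by (simp add: incr_cov_def R_def Dg_def Dh_def algebra_simps)
  qed
  have m: "\<bar>Dg\<bar> \<le> (1 - K) / 2 * (t - (t - s)) * (r - (r - s)) * ((r - s) powr (p - 1) * (t - s) powr (-1/2 - p))"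
    unfolding Dg_def by (rule g_mixed) (use assms in auto)
  have "(t - s) powr (-1/2 - p) \<le> d powr (-1/2 - p)"
    by (rule powr_mono2') (use assms p0 d in \<open>auto simp: d_def\<close>)
  then have "(r - s) powr (p - 1) * (t - s) powr (-1/2 - p) \<le> (r - s) powr (p - 1) * d powr (-1/2 - p)"
    by (intro mult_left_mono) auto
  then have m2: "\<bar>Dg\<bar> \<le> (1 - K) / 2 * s^2 * ((r - s) powr (p - 1) * d powr (-1/2 - p))"
  proof -
    have ss: "(1 - K) / 2 * (t - (t - s)) * (r - (r - s)) = (1 - K) / 2 * s^2" by (simp add: power2_eq_square)
    have k: "0 \<le> (1 - K) / 2 * s^2" using K1 by simp
    have "(1 - K) / 2 * s^2 * ((r - s) powr (p - 1) * (t - s) powr (-1/2 - p))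
        \<le> (1 - K) / 2 * s^2 * ((r - s) powr (p - 1) * d powr (-1/2 - p))"
      by (rule mult_left_mono[OF _ k]) fact
    then show ?thesis using m unfolding ss by linarith
  qed
  have h: "\<bar>Dh\<bar> \<le> 2 * s^2 * d powr (-3/2)" unfolding Dh_def by (rule sq_second) (use assms d in auto)
  have "\<bar>incr_cov R t (t - s) r (r - s)\<bar> \<le> c * \<bar>Dg\<bar> + c * \<bar>Dh\<bar>"
    unfolding e using c_pos abs_triangle_ineq[of "c * Dg" "c * Dh"] by (simp add: abs_mult)
  also have "\<dots> \<le> 1 * \<bar>Dg\<bar> + 1 * \<bar>Dh\<bar>" using c_le1 by (intro add_mono mult_right_mono) auto
  also have "\<dots> \<le> (1 - K) / 2 * s^2 * ((r - s) powr (p - 1) * d powr (-1/2 - p)) + 2 * s^2 * d powr (-3/2)"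
    using m2 h by simp
  finally show ?thesis by (simp add: d_def)
qed


lemma L_iii_small:
  assumes "0 \<le> t" "0 < s" "s \<le> r"
  shows "\<bar>second_diff_cov R t r s\<bar> \<le> 4 * sqrt s"
proof -
  have a: "\<bar>R t (r + s) - R t r\<bar> \<le> 2 * sqrt s" using R_hold[of t r "r + s"] assms by simp
  have b: "\<bar>R t r - R t (r - s)\<bar> \<le> 2 * sqrt s" using R_hold[of t "r - s" r] assms by simp
  have "second_diff_cov R t r s = (R t (r + s) - R t r) - (R t r - R t (r - s))"
    by (simp add: second_diff_cov_def)
  then show ?thesis using a b by linarith
qed

lemma L_iii_big:
  assumes "0 \<le> t" "0 < s" "2 * s \<le> r" "2 * s \<le> \<bar>t - r\<bar>"
  shows "\<bar>second_diff_cov R t r s\<bar> \<le> 4 * s^2 * ((r - s) powr (-3/2) + \<bar>t - r\<bar> powr (-3/2))"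
proof -
  define d where "d = \<bar>t - r\<bar>"
  have d: "s \<le> d" using assms by (simp add: d_def)
  define Gs where "Gs = g t (r + s) - 2 * g t r + g t (r - s)"
  define Hs where "Hs = sqrt (d + s) - 2 * sqrt d + sqrt (d - s)"
  have hs: "sqrt \<bar>t - (r + s)\<bar> + sqrt \<bar>t - (r - s)\<bar> = sqrt (d + s) + sqrt (d - s)"
  proof (cases "r \<le> t")
    case True
    then have "\<bar>t - (r + s)\<bar> = d - s" "\<bar>t - (r - s)\<bar> = d + s" using assms by (auto simp: d_def)
    then show ?thesis by simp
  next
    case False
    then have "\<bar>t - (r + s)\<bar> = d + s" "\<bar>t - (r - s)\<bar> = d - s" using assms by (auto simp: d_def)
    then show ?thesis by simp
  qed
  have e: "second_diff_cov R t r s = c * Gs - c * Hs"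
  proof -
    have "second_diff_cov R t r s = c * Gs - c * (sqrt \<bar>t - (r + s)\<bar> + sqrt \<bar>t - (r - s)\<bar> - 2 * sqrt d)"
      by (simp add: second_diff_cov_def R_def Gs_def d_def algebra_simps)
    then show ?thesis unfolding hs Hs_def by (simp add: algebra_simps)
  qed
  have G: "\<bar>Gs\<bar> \<le> (1/2) * s^2 * (r - s) powr (-3/2)" unfolding Gs_def
    by (rule g_second) (use assms in auto)
  have H: "\<bar>Hs\<bar> \<le> 2 * s^2 * d powr (-3/2)" unfolding Hs_def by (rule sq_second) (use assms d in auto)
  have "\<bar>second_diff_cov R t r s\<bar> \<le> c * \<bar>Gs\<bar> + c * \<bar>Hs\<bar>"
    unfolding e using c_pos abs_triangle_ineq4[of "c * Gs" "c * Hs"] by (simp add: abs_mult)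
  also have "\<dots> \<le> 1 * \<bar>Gs\<bar> + 1 * \<bar>Hs\<bar>" using c_le1 by (intro add_mono mult_right_mono) auto
  also have "\<dots> \<le> (1/2) * s^2 * (r - s) powr (-3/2) + 2 * s^2 * d powr (-3/2)" using G H by simp
  also have "\<dots> \<le> 4 * s^2 * (r - s) powr (-3/2) + 4 * s^2 * d powr (-3/2)"
    by (intro add_mono mult_right_mono) auto
  finally show ?thesis by (simp add: d_def distrib_left)
qed

lemma sqrt2s: "0 \<le> s \<Longrightarrow> 2 * sqrt (2 * s) \<le> 3 * sqrt s"
proof -
  assume s: "0 \<le> s"
  have "sqrt 2 \<le> sqrt (9/4)" by simp
  also have "sqrt (9/4) = 3/2" by (simp add: real_sqrt_divide)
  finally have "sqrt 2 \<le> 3/2" .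
  then have "2 * sqrt 2 * sqrt s \<le> 3 * sqrt s" using s by (intro mult_right_mono) auto
  then show ?thesis by (simp add: real_sqrt_mult)
qed

lemma L_iv_small:
  assumes "0 \<le> r" "0 < s" "s \<le> t"
  shows "\<bar>R r (t + s) - R r (t - s)\<bar> \<le> 3 * sqrt s"
proof -
  have "\<bar>R r (t + s) - R r (t - s)\<bar> \<le> 2 * sqrt ((t + s) - (t - s))"
    by (rule R_hold) (use assms in auto)
  also have "\<dots> = 2 * sqrt (2 * s)" by simp
  also have "\<dots> \<le> 3 * sqrt s" using sqrt2s assms by simp
  finally show ?thesis .
qed

lemma g_lip2:
  assumes "0 \<le> x" "0 < s" "s < t"
  shows "\<bar>g x (t + s) - g x (t - s)\<bar> \<le> s * (t - s) powr (-1/2)"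
proof -
  have a: "0 \<le> g x (t + s) - g x (t - s)" using g_lip(1)[of x "t - s" "t + s"] assms by simp
  have b: "g x (t + s) - g x (t - s) \<le> ((t + s) - (t - s)) * ((1/2) * (t - s) powr (-1/2))"
    using g_lip(2)[of x "t - s" "t + s"] assms by simp
  show ?thesis using a b by simp
qed

lemma L_iv1_big:
  assumes "0 < s" "2 * s \<le> t"
  shows "\<bar>R t (t + s) - R t (t - s)\<bar> \<le> 3 * s * (t - s) powr (-1/2)"
proof -
  have e: "R t (t + s) - R t (t - s) = c * (g t (t + s) - g t (t - s))"
  proof -
    have "\<bar>t - (t + s)\<bar> = s" "\<bar>t - (t - s)\<bar> = s" using assms by auto
    then show ?thesis by (simp add: R_def algebra_simps)
  qed
  have G: "\<bar>g t (t + s) - g t (t - s)\<bar> \<le> s * (t - s) powr (-1/2)" by (rule g_lip2) (use assms in auto)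
  have "\<bar>R t (t + s) - R t (t - s)\<bar> \<le> 1 * \<bar>g t (t + s) - g t (t - s)\<bar>"
    unfolding e using c_pos c_le1 mult_left_le_one_le[of "\<bar>g t (t + s) - g t (t - s)\<bar>" c] by (simp add: abs_mult)
  also have "\<dots> \<le> s * (t - s) powr (-1/2)" using G by simp
  also have "\<dots> \<le> 3 * (s * (t - s) powr (-1/2))" using assms by simp
  finally show ?thesis by (simp add: mult.assoc)
qed

lemma L_iv2_big:
  assumes "0 \<le> r" "0 < s" "2 * s \<le> t" "2 * s \<le> \<bar>t - r\<bar>"
  shows "\<bar>R r (t + s) - R r (t - s)\<bar> \<le> 3 * s * (t - s) powr (-1/2) + 3 * s * \<bar>t - r\<bar> powr (-1/2)"
proof -
  define d where "d = \<bar>t - r\<bar>"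
  have dpos: "0 < d" using assms by (simp add: d_def)
  define A where "A = \<bar>r - (t + s)\<bar>"
  define B where "B = \<bar>r - (t - s)\<bar>"
  have e: "R r (t + s) - R r (t - s) = c * ((g r (t + s) - g r (t - s)) - (sqrt A - sqrt B))"
    by (simp add: R_def A_def B_def algebra_simps)
  have G: "\<bar>g r (t + s) - g r (t - s)\<bar> \<le> s * (t - s) powr (-1/2)" by (rule g_lip2) (use assms in auto)
  have mA: "d / 4 \<le> A" "d / 4 \<le> B" unfolding d_def A_def B_def using assms by (cases "r \<le> t"; simp add: abs_if)+
  have "\<bar>sqrt A - sqrt B\<bar> \<le> \<bar>A - B\<bar> * ((1/2) * (d/4) powr (-1/2))"
    by (rule sq_lip) (use dpos mA in auto)
  also have "\<bar>A - B\<bar> \<le> 2 * s" unfolding A_def B_def using assms(2) by (auto simp: abs_if)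
  also have "(d/4) powr (-1/2) = 2 * d powr (-1/2)"
  proof -
    have d4: "0 < d / 4" using dpos by simp
    have "sqrt (d / 4) = sqrt d / 2" by (simp add: real_sqrt_divide)
    then show ?thesis unfolding pw_mhalf[OF d4] pw_mhalf[OF dpos] by (simp add: divide_simps)
  qed
  finally have H: "\<bar>sqrt A - sqrt B\<bar> \<le> 2 * s * ((1/2) * (2 * d powr (-1/2)))"
    using assms by (simp add: mult_right_mono)
  have "\<bar>R r (t + s) - R r (t - s)\<bar> \<le> 1 * (\<bar>g r (t + s) - g r (t - s)\<bar> + \<bar>sqrt A - sqrt B\<bar>)"
  proof -
    let ?X = "(g r (t + s) - g r (t - s)) - (sqrt A - sqrt B)"
    have "\<bar>c * ?X\<bar> = c * \<bar>?X\<bar>" using c_pos by (simp add: abs_mult)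
    also have "\<dots> \<le> \<bar>?X\<bar>" using mult_left_le_one_le[of "\<bar>?X\<bar>" c] c_pos c_le1 by simp
    also have "\<dots> \<le> \<bar>g r (t + s) - g r (t - s)\<bar> + \<bar>sqrt A - sqrt B\<bar>" by (rule abs_triangle_ineq4)
    finally show ?thesis unfolding e by simp
  qed
  also have "\<dots> \<le> s * (t - s) powr (-1/2) + 2 * s * ((1/2) * (2 * d powr (-1/2)))" using G H by simp
  also have "\<dots> \<le> 3 * s * (t - s) powr (-1/2) + 3 * s * d powr (-1/2)"
    using assms by (intro add_mono) (auto simp: algebra_simps)
  finally show ?thesis by (simp add: d_def)
qed

lemma L_iv3:
  assumes "0 < s" "2 * s < t"
  shows "\<bar>R s t - R s (t - s)\<bar> \<le> s * (t - 2 * s) powr (-1/2)"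
proof -
  have m: "0 < t - 2 * s" using assms by simp
  have e: "R s t - R s (t - s) = c * ((g s t - g s (t - s)) - (sqrt (t - s) - sqrt (t - 2 * s)))"
  proof -
    have "\<bar>s - t\<bar> = t - s" "\<bar>s - (t - s)\<bar> = t - 2 * s" using assms by auto
    then show ?thesis by (simp add: R_def algebra_simps)
  qed
  have G0: "0 \<le> g s t - g s (t - s)" using g_lip(1)[of s "t - s" t] assms by simp
  have G1: "g s t - g s (t - s) \<le> (t - (t - s)) * ((1/2) * (t - s) powr (-1/2))"
    using g_lip(2)[of s "t - s" t] assms by simp
  have "(t - s) powr (-1/2) \<le> (t - 2 * s) powr (-1/2)"
    by (rule powr_mono2') (use assms in auto)
  then have "s * ((1/2) * (t - s) powr (-1/2)) \<le> s * ((1/2) * (t - 2 * s) powr (-1/2))"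
    using assms by (intro mult_left_mono) auto
  moreover have "(t - (t - s)) = s" by simp
  ultimately have G: "\<bar>g s t - g s (t - s)\<bar> \<le> s * ((1/2) * (t - 2 * s) powr (-1/2))"
    using G0 G1 by (simp only: abs_of_nonneg[OF G0])
  have H: "\<bar>sqrt (t - s) - sqrt (t - 2 * s)\<bar> \<le> \<bar>(t - s) - (t - 2 * s)\<bar> * ((1/2) * (t - 2 * s) powr (-1/2))"
    by (rule sq_lip) (use assms in auto)
  have "\<bar>R s t - R s (t - s)\<bar> \<le> 1 * (\<bar>g s t - g s (t - s)\<bar> + \<bar>sqrt (t - s) - sqrt (t - 2 * s)\<bar>)"
  proof -
    let ?X = "(g s t - g s (t - s)) - (sqrt (t - s) - sqrt (t - 2 * s))"
    have "\<bar>c * ?X\<bar> = c * \<bar>?X\<bar>" using c_pos by (simp add: abs_mult)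
    also have "\<dots> \<le> \<bar>?X\<bar>" using mult_left_le_one_le[of "\<bar>?X\<bar>" c] c_pos c_le1 by simp
    also have "\<dots> \<le> \<bar>g s t - g s (t - s)\<bar> + \<bar>sqrt (t - s) - sqrt (t - 2 * s)\<bar>" by (rule abs_triangle_ineq4)
    finally show ?thesis unfolding e by simp
  qed
  also have "\<dots> \<le> s * ((1/2) * (t - 2 * s) powr (-1/2)) + s * ((1/2) * (t - 2 * s) powr (-1/2))"
    using G H assms by simp
  finally show ?thesis by simp
qed


lemma L_ii_sym:
  assumes "0 < s" "2 * s \<le> r" "2 * s \<le> t" "2 * s \<le> \<bar>t - r\<bar>"
  shows "\<bar>incr_cov R t (t - s) r (r - s)\<bar>
     \<le> (1 - K) / 2 * s^2 * ((min t r - s) powr (p - 1) * \<bar>t - r\<bar> powr (-1/2 - p)) + 2 * s^2 * \<bar>t - r\<bar> powr (-3/2)"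
proof (cases "r \<le> t")
  case True
  then have "r + 2 * s \<le> t" "min t r = r" "\<bar>t - r\<bar> = t - r" using assms by auto
  then show ?thesis using L_ii[of s r t] assms by simp
next
  case False
  then have h: "t + 2 * s \<le> r" "min t r = t" "\<bar>t - r\<bar> = r - t" using assms by auto
  have "incr_cov R t (t - s) r (r - s) = incr_cov R r (r - s) t (t - s)"
    by (simp add: incr_cov_def R_sym[of t r] R_sym[of t "r - s"] R_sym[of "t - s" r] R_sym[of "t - s" "r - s"])
  then show ?thesis using L_ii[of s t r] assms h by simp
qed

end

theorem proposition5p1:
  fixes H K T :: real
  assumes "0 < H" and "H \<le> 1/2" and "0 < K" and "K \<le> 1" and "2 * H * K = 1/2"
    and "0 < T"
  shows "\<exists>C1 C2 C3. 0 < C1 \<and> 0 < C2 \<and> 0 < C3 \<and>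
           cond_i (bfbm_cov H K) T C1 \<and> cond_ii (bfbm_cov H K) T C1 \<and>
           cond_iii (bfbm_cov H K) T C2 \<and> cond_iv (bfbm_cov H K) T C3"
proof -
  define p where "p = 2 * H"
  have pK: "p * K = 1/2" using assms(5) by (simp add: p_def)
  interpret bf p K
    by unfold_locales (use assms pK in \<open>auto simp: p_def\<close>)
  have Req: "bfbm_cov H K = R"
  proof (intro ext)
    fix x y
    have "\<bar>x - y\<bar> powr (2 * H * K) = sqrt \<bar>x - y\<bar>" unfolding assms(5) by (simp add: powr_half_sqrt)
    then show "bfbm_cov H K x y = R x y"
      unfolding bfbm_cov_def R_def c_def g_def by (simp add: p_def)
  qed
  have hs: "s powr (1/2) = sqrt s" if "0 \<le> s" for s :: real using that by (simp add: powr_half_sqrt)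
  have ci: "cond_i R T 3"
    unfolding cond_i_def using L_i hs by auto
  have cii: "cond_ii R T 3"
  proof (cases "K = 1")
    case True
    show ?thesis unfolding cond_ii_def
    proof (intro exI conjI allI impI)
      show "1 < (3/2::real)" "(3/2::real) \<le> 3/2" "(0::real) = 3/2 - 3/2" by auto
      fix s t r assume a: "0 < s \<and> 2 * s \<le> r \<and> r \<le> T \<and> 2 * s \<le> t \<and> t \<le> T \<and> 2 * s \<le> \<bar>t - r\<bar>"
      have "\<bar>incr_cov R t (t - s) r (r - s)\<bar> \<le> 2 * s^2 * \<bar>t - r\<bar> powr (-3/2)"
        using L_ii_sym[of s r t] a True by simp
      also have "\<dots> \<le> 3 * s^2 * \<bar>t - r\<bar> powr - (3/2) * (min t r - s) powr (- 0) + 3 * s^2 * \<bar>t - r\<bar> powr (-3/2)"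
        by simp
      finally show "\<bar>incr_cov R t (t - s) r (r - s)\<bar> \<le> 3 * s^2 * \<bar>t - r\<bar> powr - (3/2) * (min t r - s) powr (- 0) + 3 * s^2 * \<bar>t - r\<bar> powr (-3/2)" .
    qed
  next
    case False
    then have K1': "K < 1" using assms by simp
    have phalf: "1/2 < p"
    proof (rule ccontr)
      assume "\<not> 1/2 < p"
      then have "p * K \<le> 1/2 * K" using assms by (intro mult_right_mono) auto
      then show False using pK K1' by simp
    qed
    show ?thesis unfolding cond_ii_def
    proof (intro exI conjI allI impI)
      show "1 < 1/2 + p" using phalf by simp
      show "1/2 + p \<le> 3/2" using p1 by simp
      show "1 - p = 3/2 - (1/2 + p)" by simp
      fix s t r assume a: "0 < s \<and> 2 * s \<le> r \<and> r \<le> T \<and> 2 * s \<le> t \<and> t \<le> T \<and> 2 * s \<le> \<bar>t - r\<bar>"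
      have e1: "- (1/2 + p) = -1/2 - p" by simp
      have e2: "- (1 - p) = p - 1" by simp
      have k: "(1 - K) / 2 \<le> 3" using assms by simp
      have nn: "0 \<le> s^2 * ((min t r - s) powr (p - 1) * \<bar>t - r\<bar> powr (-1/2 - p))" by simp
      have "\<bar>incr_cov R t (t - s) r (r - s)\<bar>
          \<le> (1 - K) / 2 * s^2 * ((min t r - s) powr (p - 1) * \<bar>t - r\<bar> powr (-1/2 - p)) + 2 * s^2 * \<bar>t - r\<bar> powr (-3/2)"
        using L_ii_sym[of s r t] a by simp
      also have "\<dots> \<le> 3 * (s^2 * ((min t r - s) powr (p - 1) * \<bar>t - r\<bar> powr (-1/2 - p))) + 3 * s^2 * \<bar>t - r\<bar> powr (-3/2)"
        using mult_right_mono[OF k nn] by (intro add_mono) (auto simp: mult.assoc)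
      finally show "\<bar>incr_cov R t (t - s) r (r - s)\<bar> \<le> 3 * s\<^sup>2 * \<bar>t - r\<bar> powr - (1 / 2 + p) * (min t r - s) powr - (1 - p) + 3 * s\<^sup>2 * \<bar>t - r\<bar> powr (- 3 / 2)"
        unfolding e1 e2 by (simp add: mult_ac)
    qed
  qed
  have ciii: "cond_iii R T 4"
    unfolding cond_iii_def
  proof (intro allI impI conjI)
    fix t r s assume a: "0 < t \<and> t \<le> T \<and> 0 < s \<and> s \<le> r \<and> r \<le> T"
    show "r < 2 * s \<or> \<bar>t - r\<bar> < 2 * s \<Longrightarrow> \<bar>second_diff_cov R t r s\<bar> \<le> 4 * s powr (1 / 2)"
      using L_iii_small[of t s r] a hs[of s] by simp
    show "2 * s \<le> r \<and> 2 * s \<le> \<bar>t - r\<bar> \<Longrightarrow> \<bar>second_diff_cov R t r s\<bar> \<le> 4 * s\<^sup>2 * ((r - s) powr (- 3 / 2) + \<bar>t - r\<bar> powr (- 3 / 2))"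
      using L_iii_big[of t s r] a by simp
  qed
  have civ: "cond_iv R T 3"
    unfolding cond_iv_def
  proof (intro conjI allI impI)
    fix s t assume a: "0 < s \<and> s \<le> t \<and> t \<le> T - s"
    show "t < 2 * s \<Longrightarrow> \<bar>R t (t + s) - R t (t - s)\<bar> \<le> 3 * s powr (1 / 2)"
      using L_iv_small[of t s t] a hs[of s] by simp
    show "2 * s \<le> t \<Longrightarrow> \<bar>R t (t + s) - R t (t - s)\<bar> \<le> 3 * s * (t - s) powr (- 1 / 2)"
      using L_iv1_big[of s t] a by simp
  next
    fix s t r assume a: "0 < s \<and> s \<le> t \<and> t \<le> T - s \<and> s \<le> r \<and> r \<le> T"
    show "t < 2 * s \<or> \<bar>t - r\<bar> < 2 * s \<Longrightarrow> \<bar>R r (t + s) - R r (t - s)\<bar> \<le> 3 * s powr (1 / 2)"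
      using L_iv_small[of r s t] a hs[of s] by simp
    show "2 * s \<le> t \<and> 2 * s \<le> \<bar>t - r\<bar> \<Longrightarrow> \<bar>R r (t + s) - R r (t - s)\<bar> \<le> 3 * s * (t - s) powr (- 1 / 2) + 3 * s * \<bar>t - r\<bar> powr (- 1 / 2)"
      using L_iv2_big[of r s t] a by simp
  next
    show "\<exists>\<gamma>>0. \<forall>s t. 0 < s \<and> 2 * s < t \<and> t \<le> T \<longrightarrow> \<bar>R s t - R s (t - s)\<bar> \<le> 3 * s powr (1 / 2 + \<gamma>) * (t - 2 * s) powr - \<gamma>"
    proof (intro exI[of _ "1/2"] conjI allI impI)
      fix s t :: real assume a: "0 < s \<and> 2 * s < t \<and> t \<le> T"
      have e: "- (1/2) = (-1/2::real)" by simp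
      have "\<bar>R s t - R s (t - s)\<bar> \<le> s * (t - 2 * s) powr (-1/2)" using L_iv3[of s t] a by simp
      also have "\<dots> \<le> 3 * s powr (1/2 + 1/2) * (t - 2 * s) powr (-1/2)" using a by simp
      finally show "\<bar>R s t - R s (t - s)\<bar> \<le> 3 * s powr (1/2 + 1/2) * (t - 2 * s) powr - (1/2)"
        unfolding e .
    qed simp
  qed
  show ?thesis unfolding Req
    by (rule exI[of _ 3], rule exI[of _ 4], rule exI[of _ 3]) (use ci cii ciii civ in simp)
qed

end
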